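(* Let $F \in \mathbb{C}^{n \times n}$ be a unitary matrix and let $y = F\hat{x} + e$, where $\hat{x} \in \mathbb{C}^{n}$ is $k$-sparse and $e \in \mathbb{C}^{n}$. If $\|e\|_{\infty} \leq \eta_1$ and $\|F^*e\|_{\infty} \leq \eta_{2}$, then any solution $x^{\#}$ of the modified Dantzig Selector problem $$\min_{z \in \mathbb{C}^{n}}\|z\|_1 \quad \text{subject to} \quad \|F^*(y - Fz)\|_\infty \leq \eta_2, \quad \|Fz - y\|_\infty \leq \eta_1$$ satisfies $$\| x^{\#}-\hat{x}\|_1 \leq 4k\eta_2 \quad\text{and}\quad \| x^{\#}-\hat{x}\|_2 \leq 6\sqrt{k}\,\eta_2 .$$
   Context: A vector is $k$-sparse if it has at most $k$ nonzero entries. $F^*$ denotes the conjugate transpose of $F$. *)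

theory Defs
  imports "HOL-Analysis.Analysis"
begin

definition conj_transpose :: "complex ^ 'n ^ 'm \<Rightarrow> complex ^ 'm ^ 'n" where
  "conj_transpose A = (\<chi> i j. cnj (A $ j $ i))"

definition unitary :: "complex ^ 'n ^ 'n \<Rightarrow> bool" where
  "unitary F \<longleftrightarrow> conj_transpose F ** F = mat 1 \<and> F ** conj_transpose F = mat 1"

definition norm1 :: "complex ^ 'n \<Rightarrow> real" where
  "norm1 x = (\<Sum>i\<in>UNIV. cmod (x $ i))"

definition norm2 :: "complex ^ 'n \<Rightarrow> real" where
  "norm2 x = sqrt (\<Sum>i\<in>UNIV. (cmod (x $ i))^2)"

definition norm_inf :: "complex ^ 'n \<Rightarrow> real" where
  "norm_inf x = Max (range (\<lambda>i. cmod (x $ i)))"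

definition sparse :: "nat \<Rightarrow> complex ^ 'n \<Rightarrow> bool" where
  "sparse k x \<longleftrightarrow> card {i. x $ i \<noteq> 0} \<le> k"

definition dantzig_feasible ::
  "complex ^ 'n ^ 'n \<Rightarrow> complex ^ 'n \<Rightarrow> real \<Rightarrow> real \<Rightarrow> complex ^ 'n \<Rightarrow> bool" where
  "dantzig_feasible F y \<eta>1 \<eta>2 z \<longleftrightarrow>
     norm_inf (conj_transpose F *v (y - F *v z)) \<le> \<eta>2 \<and> norm_inf (F *v z - y) \<le> \<eta>1"

definition dantzig_solution ::
  "complex ^ 'n ^ 'n \<Rightarrow> complex ^ 'n \<Rightarrow> real \<Rightarrow> real \<Rightarrow> complex ^ 'n \<Rightarrow> bool" where
  "dantzig_solution F y \<eta>1 \<eta>2 x \<longleftrightarrow>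
     dantzig_feasible F y \<eta>1 \<eta>2 x \<and>
     (\<forall>z. dantzig_feasible F y \<eta>1 \<eta>2 z \<longrightarrow> norm1 x \<le> norm1 z)"

end

theory Submission
  imports Defs
begin

lemma norm_inf_ge: "cmod (x $ i) \<le> norm_inf x"
  unfolding norm_inf_def by (rule Max_ge) auto

lemma norm_inf_le: "norm_inf x \<le> c \<Longrightarrow> cmod (x $ i) \<le> c"
  using norm_inf_ge[of x i] by linarith

lemma norm_inf_uminus: "norm_inf (- x) = norm_inf x"
  unfolding norm_inf_def by simp

theorem theorem4:
  fixes F :: "complex ^ 'n ^ 'n" and xhat e y xs :: "complex ^ 'n"
    and k :: nat and \<eta>1 \<eta>2 :: real
  assumes "unitary F"
    and "y = F *v xhat + e"
    and "sparse k xhat"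
    and "norm_inf e \<le> \<eta>1"
    and "norm_inf (conj_transpose F *v e) \<le> \<eta>2"
    and "dantzig_solution F y \<eta>1 \<eta>2 xs"
  shows "norm1 (xs - xhat) \<le> 4 * real k * \<eta>2 \<and> norm2 (xs - xhat) \<le> 6 * sqrt (real k) * \<eta>2"
proof -
  define G where "G = conj_transpose F"
  define h where "h = xs - xhat"
  have GF: "G *v (F *v v) = v" for v
    using assms(1) unfolding unitary_def G_def
    by (metis matrix_vector_mul_assoc matrix_vector_mul_lid)
  have eq1: "G *v (y - F *v xs) = G *v e - h"
  proof -
    have "y - F *v xs = e - F *v h"
      unfolding h_def assms(2) by (simp add: matrix_vector_mult_diff_distrib)
    then show ?thesis by (simp add: matrix_vector_mult_diff_distrib GF)
  qed
  have feas: "norm_inf (G *v e - h) \<le> \<eta>2"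
    using assms(6) eq1 unfolding dantzig_solution_def dantzig_feasible_def G_def by simp
  have e2: "cmod ((G *v e) $ i) \<le> \<eta>2" for i
    using assms(5) norm_inf_le unfolding G_def by blast
  have eta2: "0 \<le> \<eta>2" using e2[of undefined] norm_ge_zero order_trans by blast
  have hinf: "cmod (h $ i) \<le> 2 * \<eta>2" for i
  proof -
    have "h $ i = (G *v e) $ i - (G *v e - h) $ i" by simp
    hence "cmod (h $ i) \<le> cmod ((G *v e) $ i) + cmod ((G *v e - h) $ i)"
      by (metis norm_triangle_ineq4)
    thus ?thesis using e2[of i] norm_inf_le[OF feas, of i] by linarith
  qed
  have xhat_feas: "dantzig_feasible F y \<eta>1 \<eta>2 xhat"
  proof -
    have "G *v (y - F *v xhat) = G *v e" by (simp add: assms(2))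
    moreover have "F *v xhat - y = - e" by (simp add: assms(2))
    ultimately show ?thesis unfolding dantzig_feasible_def G_def[symmetric]
      using assms(4,5) G_def by (simp add: norm_inf_uminus)
  qed
  hence l1: "norm1 xs \<le> norm1 xhat"
    using assms(6) unfolding dantzig_solution_def by blast
  define S where "S = {i. xhat $ i \<noteq> 0}"
  have cardS: "card S \<le> k" using assms(3) unfolding sparse_def S_def .
  have fin: "finite S" "finite (- S)" by auto
  have xs_eq: "xs $ i = xhat $ i + h $ i" for i unfolding h_def by simp
  have A: "norm1 xs = (\<Sum>i\<in>S. cmod (xs $ i)) + (\<Sum>i\<in>-S. cmod (xs $ i))"
    unfolding norm1_def using sum.union_disjoint[OF fin(1) fin(2), of "\<lambda>i. cmod (xs $ i)"] by (simp add: Un_commute)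
  have B: "norm1 xhat = (\<Sum>i\<in>S. cmod (xhat $ i))"
    unfolding norm1_def by (rule sum.mono_neutral_right) (auto simp: S_def)
  have C: "norm1 h = (\<Sum>i\<in>S. cmod (h $ i)) + (\<Sum>i\<in>-S. cmod (h $ i))"
    unfolding norm1_def using sum.union_disjoint[OF fin(1) fin(2), of "\<lambda>i. cmod (h $ i)"] by (simp add: Un_commute)
  have D: "(\<Sum>i\<in>-S. cmod (xs $ i)) = (\<Sum>i\<in>-S. cmod (h $ i))"
    by (rule sum.cong) (auto simp: xs_eq S_def)
  have E: "(\<Sum>i\<in>S. cmod (xhat $ i)) - (\<Sum>i\<in>S. cmod (h $ i)) \<le> (\<Sum>i\<in>S. cmod (xs $ i))"
  proof -
    have "(\<Sum>i\<in>S. cmod (xhat $ i) - cmod (h $ i)) \<le> (\<Sum>i\<in>S. cmod (xs $ i))"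
      proof (rule sum_mono)
      fix i
      have "cmod (xhat $ i) \<le> cmod (xs $ i) + cmod (h $ i)"
        using norm_triangle_ineq4[of "xs $ i" "h $ i"] by (simp add: xs_eq)
      thus "cmod (xhat $ i) - cmod (h $ i) \<le> cmod (xs $ i)" by linarith
    qed
    thus ?thesis by (simp add: sum_subtractf)
  qed
  have cone: "(\<Sum>i\<in>-S. cmod (h $ i)) \<le> (\<Sum>i\<in>S. cmod (h $ i))"
    using l1 A B D E by linarith
  have hS: "(\<Sum>i\<in>S. cmod (h $ i)) \<le> real k * (2 * \<eta>2)"
  proof -
    have "(\<Sum>i\<in>S. cmod (h $ i)) \<le> (\<Sum>i\<in>S. 2 * \<eta>2)" by (rule sum_mono) (rule hinf)
    also have "\<dots> = real (card S) * (2 * \<eta>2)" by simp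
    also have "\<dots> \<le> real k * (2 * \<eta>2)" using cardS eta2 by (intro mult_right_mono) auto
    finally show ?thesis .
  qed
  have n1: "norm1 h \<le> 4 * real k * \<eta>2" using C cone hS by linarith
  have sq: "(\<Sum>i\<in>UNIV. (cmod (h $ i))^2) \<le> 8 * real k * \<eta>2^2"
  proof -
    have "(\<Sum>i\<in>UNIV. (cmod (h $ i))^2) \<le> (\<Sum>i\<in>UNIV. 2 * \<eta>2 * cmod (h $ i))"
      by (rule sum_mono) (simp add: power2_eq_square hinf mult_right_mono)
    also have "\<dots> = 2 * \<eta>2 * norm1 h" unfolding norm1_def by (simp add: sum_distrib_left)
    also have "\<dots> \<le> 2 * \<eta>2 * (4 * real k * \<eta>2)" using n1 eta2 by (intro mult_left_mono) auto
    finally show ?thesis by (simp add: power2_eq_square mult_ac)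
  qed
  have "norm2 h \<le> sqrt (8 * real k * \<eta>2^2)"
    unfolding norm2_def using sq real_sqrt_le_mono by blast
  also have "\<dots> = sqrt 8 * sqrt (real k) * \<eta>2"
    using eta2 by (simp add: real_sqrt_mult)
  also have "\<dots> \<le> 6 * sqrt (real k) * \<eta>2"
  proof -
    have "sqrt 8 \<le> 6" by (rule real_le_lsqrt) auto
    thus ?thesis using eta2 by (intro mult_right_mono) auto
  qed
  finally show ?thesis using n1 unfolding h_def by simp
qed

end
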